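(* Let $X$ be a $k$-regular bipartite graph on $n$ vertices with both parts of size $n/2$, let $\lambda_2$ be the second largest eigenvalue of its adjacency matrix, and suppose every pair of distinct vertices of $X$ has at most $q$ common neighbours. Then $\mathrm{motion}(X)\geq\frac{k-|\lambda_2|-q}{2k}\,n$.
   Context: The motion $\mathrm{motion}(X)$ of a graph is the minimum, over non-identity automorphisms $\sigma$ of $X$, of the number of vertices not fixed by $\sigma$ (taken to be $+\infty$ if the automorphism group is trivial). *)

theory Defs
  imports "Jordan_Normal_Form.Char_Poly" "HOL-Library.Extended_Real"
begin

definition simple_graph :: "nat \<Rightarrow> (nat \<Rightarrow> nat \<Rightarrow> bool) \<Rightarrow> bool" where
  "simple_graph n E \<longleftrightarrow> (\<forall>u v. E u v \<longrightarrow> u < n \<and> v < n \<and> u \<noteq> v \<and> E v u)"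

definition neighbours :: "nat \<Rightarrow> (nat \<Rightarrow> nat \<Rightarrow> bool) \<Rightarrow> nat \<Rightarrow> nat set" where
  "neighbours n E v = {w. w < n \<and> E v w}"

definition regular :: "nat \<Rightarrow> (nat \<Rightarrow> nat \<Rightarrow> bool) \<Rightarrow> nat \<Rightarrow> bool" where
  "regular n E k \<longleftrightarrow> (\<forall>v<n. card (neighbours n E v) = k)"

definition balanced_bipartite :: "nat \<Rightarrow> (nat \<Rightarrow> nat \<Rightarrow> bool) \<Rightarrow> bool" where
  "balanced_bipartite n E \<longleftrightarrow> (\<exists>A. A \<subseteq> {0..<n} \<and> 2 * card A = n \<and>
      (\<forall>u v. E u v \<longrightarrow> (u \<in> A \<longleftrightarrow> v \<notin> A)))"

definition adj_matrix :: "nat \<Rightarrow> (nat \<Rightarrow> nat \<Rightarrow> bool) \<Rightarrow> real mat" where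
  "adj_matrix n E = mat n n (\<lambda>(i, j). if E i j then 1 else 0)"

definition eigenvalue_mset :: "real mat \<Rightarrow> real multiset" where
  "eigenvalue_mset M = (\<Sum>x\<in>{x. poly (char_poly M) x = 0}. replicate_mset (order x (char_poly M)) x)"

definition eigenvalues_desc :: "real mat \<Rightarrow> real list" where
  "eigenvalues_desc M = rev (sorted_list_of_multiset (eigenvalue_mset M))"

definition lambda2 :: "real mat \<Rightarrow> real" where
  "lambda2 M = eigenvalues_desc M ! 1"

definition automorphism :: "nat \<Rightarrow> (nat \<Rightarrow> nat \<Rightarrow> bool) \<Rightarrow> (nat \<Rightarrow> nat) \<Rightarrow> bool" where
  "automorphism n E \<sigma> \<longleftrightarrow> bij_betw \<sigma> {0..<n} {0..<n} \<and>
      (\<forall>u<n. \<forall>v<n. E u v \<longleftrightarrow> E (\<sigma> u) (\<sigma> v))"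

text \<open>Motion: minimum number of moved vertices over non-identity automorphisms;
  infinity if the automorphism group is trivial (Inf of the empty set of enat).\<close>
definition motion :: "nat \<Rightarrow> (nat \<Rightarrow> nat \<Rightarrow> bool) \<Rightarrow> enat" where
  "motion n E = Inf {enat (card {v. v < n \<and> \<sigma> v \<noteq> v}) | \<sigma>.
      automorphism n E \<sigma> \<and> (\<exists>v<n. \<sigma> v \<noteq> v)}"

end

theory Submission
  imports Defs "Jordan_Normal_Form.Jordan_Normal_Form_Existence"
    "Jordan_Normal_Form.Jordan_Normal_Form_Uniqueness"
begin

lemma gram_orth:
  fixes a p :: "nat \<Rightarrow> nat \<Rightarrow> real" and d :: "nat \<Rightarrow> real"
  assumes sym: "\<forall>i<n. \<forall>j<n. a i j = a j i"
    and eig: "\<forall>i<n. \<forall>r<n. (\<Sum>j<n. a r j * p j i) = d i * p r i"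
    and il: "i < n" "l < n" "d i \<noteq> d l"
  shows "(\<Sum>r<n. p r i * p r l) = 0"
proof -
  have "d i * (\<Sum>r<n. p r i * p r l) = (\<Sum>r<n. (d i * p r i) * p r l)"
    by (simp add: sum_distrib_left mult.assoc)
  also have "\<dots> = (\<Sum>r<n. (\<Sum>s<n. a r s * p s i) * p r l)"
    using eig il by simp
  also have "\<dots> = (\<Sum>r<n. \<Sum>s<n. p s i * (a r s * p r l))"
    by (simp add: sum_distrib_right sum_distrib_left mult_ac)
  also have "\<dots> = (\<Sum>s<n. p s i * (\<Sum>r<n. a s r * p r l))"
    by (subst sum.swap) (simp add: sum_distrib_left sym)
  also have "\<dots> = (\<Sum>s<n. p s i * (d l * p s l))"
    using eig il by simp
  also have "\<dots> = d l * (\<Sum>r<n. p r i * p r l)"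
    by (simp add: sum_distrib_left mult.commute mult.left_commute)
  finally have "(d i - d l) * (\<Sum>r<n. p r i * p r l) = 0" by (simp add: algebra_simps)
  with il show ?thesis by simp
qed


lemma sumsq_expand:
  fixes p :: "nat \<Rightarrow> nat \<Rightarrow> real"
  shows "(\<Sum>r<n. (\<Sum>i<n. p r i * c i)^2) = (\<Sum>i<n. \<Sum>l<n. c i * c l * (\<Sum>r<n. p r i * p r l))"
proof -
  have "(\<Sum>r<n. (\<Sum>i<n. p r i * c i)^2) = (\<Sum>r<n. \<Sum>i<n. \<Sum>l<n. c i * c l * (p r i * p r l))"
    by (simp add: power2_eq_square sum_product mult_ac)
  also have "\<dots> = (\<Sum>i<n. \<Sum>r<n. \<Sum>l<n. c i * c l * (p r i * p r l))"
    by (rule sum.swap)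
  also have "\<dots> = (\<Sum>i<n. \<Sum>l<n. \<Sum>r<n. c i * c l * (p r i * p r l))"
    by (intro sum.cong refl sum.swap)
  also have "\<dots> = (\<Sum>i<n. \<Sum>l<n. c i * c l * (\<Sum>r<n. p r i * p r l))"
    by (simp add: sum_distrib_left)
  finally show ?thesis .
qed


lemma quad_expand:
  fixes a p :: "nat \<Rightarrow> nat \<Rightarrow> real" and d :: "nat \<Rightarrow> real"
  assumes eig: "\<forall>i<n. \<forall>r<n. (\<Sum>j<n. a r j * p j i) = d i * p r i"
    and x: "\<forall>r<n. x r = (\<Sum>i<n. p r i * c i)"
  shows "(\<Sum>r<n. \<Sum>s<n. x r * a r s * x s) = (\<Sum>i<n. \<Sum>l<n. c i * c l * d l * (\<Sum>r<n. p r i * p r l))"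
proof -
  have inner: "(\<Sum>s<n. a r s * x s) = (\<Sum>l<n. c l * d l * p r l)" if r: "r < n" for r
  proof -
    have "(\<Sum>s<n. a r s * x s) = (\<Sum>s<n. a r s * (\<Sum>l<n. p s l * c l))"
      using x by (intro sum.cong refl) simp
    also have "\<dots> = (\<Sum>s<n. \<Sum>l<n. c l * (a r s * p s l))"
      by (simp add: sum_distrib_left mult_ac)
    also have "\<dots> = (\<Sum>l<n. c l * (\<Sum>s<n. a r s * p s l))"
      by (subst sum.swap) (simp add: sum_distrib_left)
    also have "\<dots> = (\<Sum>l<n. c l * d l * p r l)"
      using eig r by (intro sum.cong refl) simp
    finally show ?thesis .
  qed
  have "(\<Sum>r<n. \<Sum>s<n. x r * a r s * x s) = (\<Sum>r<n. x r * (\<Sum>s<n. a r s * x s))"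
    by (simp add: sum_distrib_left mult.assoc)
  also have "\<dots> = (\<Sum>r<n. (\<Sum>i<n. p r i * c i) * (\<Sum>l<n. c l * d l * p r l))"
    using x inner by (intro sum.cong refl) simp
  also have "\<dots> = (\<Sum>r<n. \<Sum>i<n. \<Sum>l<n. (p r i * c i) * (c l * d l * p r l))"
    by (simp add: sum_product)
  also have "\<dots> = (\<Sum>r<n. \<Sum>i<n. \<Sum>l<n. c i * c l * d l * (p r i * p r l))"
    by (intro sum.cong refl) (simp add: mult_ac)
  also have "\<dots> = (\<Sum>i<n. \<Sum>r<n. \<Sum>l<n. c i * c l * d l * (p r i * p r l))"
    by (rule sum.swap)
  also have "\<dots> = (\<Sum>i<n. \<Sum>l<n. \<Sum>r<n. c i * c l * d l * (p r i * p r l))"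
    by (intro sum.cong refl sum.swap)
  also have "\<dots> = (\<Sum>i<n. \<Sum>l<n. c i * c l * d l * (\<Sum>r<n. p r i * p r l))"
    by (simp add: sum_distrib_left)
  finally show ?thesis .
qed

lemma courant_core:
  fixes a p :: "nat \<Rightarrow> nat \<Rightarrow> real" and d w1 w2 :: "nat \<Rightarrow> real" and \<mu> :: real
  assumes sym: "\<forall>i<n. \<forall>j<n. a i j = a j i"
    and eig: "\<forall>i<n. \<forall>r<n. (\<Sum>j<n. a r j * p j i) = d i * p r i"
    and span: "\<And>x. \<exists>c. \<forall>r<n. x r = (\<Sum>i<n. p r i * c i)"
    and indep: "\<And>c. \<forall>r<n. (\<Sum>i<n. p r i * c i) = 0 \<Longrightarrow> \<forall>i<n. c i = 0"
    and nz: "\<And>\<alpha> \<beta>. \<alpha> \<noteq> 0 \<or> \<beta> \<noteq> 0 \<Longrightarrow> \<exists>r<n. \<alpha> * w1 r + \<beta> * w2 r \<noteq> 0"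
    and quad: "\<And>\<alpha> \<beta>. \<mu> * (\<Sum>r<n. (\<alpha> * w1 r + \<beta> * w2 r)^2)
        \<le> (\<Sum>r<n. \<Sum>s<n. (\<alpha> * w1 r + \<beta> * w2 r) * a r s * (\<alpha> * w1 s + \<beta> * w2 s))"
  shows "2 \<le> card {i. i<n \<and> \<mu> \<le> d i}"
proof (rule ccontr)
  assume "\<not> 2 \<le> card {i. i<n \<and> \<mu> \<le> d i}"
  hence c2: "card {i. i<n \<and> \<mu> \<le> d i} \<le> 1" by simp
  obtain j where J: "\<And>i. i < n \<Longrightarrow> \<mu> \<le> d i \<Longrightarrow> i = j"
  proof (cases "{i. i<n \<and> \<mu> \<le> d i} = {}")
    case True thus ?thesis using that by blast
  next
    case False
    then obtain j where "j \<in> {i. i<n \<and> \<mu> \<le> d i}" by blast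
    moreover have "finite {i. i<n \<and> \<mu> \<le> d i}" by simp
    ultimately have "{i. i<n \<and> \<mu> \<le> d i} = {j}" using c2
      by (metis (no_types, lifting) card_1_singletonE card_0_eq empty_iff le_eq_less_or_eq less_one singletonD)
    thus ?thesis using that by blast
  qed
  define G where "G i l = (\<Sum>r<n. p r i * p r l)" for i l
  define special where "special = (j < n \<and> \<mu> \<le> d j)"
  define s1 where "s1 = (\<Sum>r<n. p r j * w1 r)"
  define s2 where "s2 = (\<Sum>r<n. p r j * w2 r)"
  obtain \<alpha> \<beta> where ab: "\<alpha> \<noteq> 0 \<or> \<beta> \<noteq> 0" and orth: "(\<Sum>r<n. p r j * (\<alpha> * w1 r + \<beta> * w2 r)) = 0"
  proof (cases "s1 = 0 \<and> s2 = 0")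
    case True
    have "(\<Sum>r<n. p r j * (1 * w1 r + 0 * w2 r)) = 0" using True unfolding s1_def by simp
    thus ?thesis using that[of 1 0] by simp
  next
    case False
    have "(\<Sum>r<n. p r j * (s2 * w1 r + (- s1) * w2 r)) = s2 * s1 - s1 * s2"
    proof -
      have "(\<Sum>r<n. p r j * (s2 * w1 r + (- s1) * w2 r)) = s2 * (\<Sum>r<n. p r j * w1 r) - s1 * (\<Sum>r<n. p r j * w2 r)"
        by (simp add: sum_distrib_left sum_subtractf algebra_simps)
      thus ?thesis unfolding s1_def[symmetric] s2_def[symmetric] .
    qed
    thus ?thesis using that[of s2 "-s1"] False by auto
  qed
  define x where "x r = \<alpha> * w1 r + \<beta> * w2 r" for r
  obtain c where c: "\<forall>r<n. x r = (\<Sum>i<n. p r i * c i)" using span by blast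
  have Gorth: "G i l = 0" if "i < n" "l < n" "d i \<noteq> d l" for i l
    unfolding G_def using gram_orth[OF sym eig that] .
  have cj: "c j = 0" if sp: special
  proof -
    have jn: "j < n" using sp special_def by auto
    have "0 = (\<Sum>r<n. p r j * x r)" using orth unfolding x_def by simp
    also have "\<dots> = (\<Sum>r<n. \<Sum>i<n. c i * (p r j * p r i))"
      using c by (intro sum.cong refl) (simp add: sum_distrib_left mult_ac)
    also have "\<dots> = (\<Sum>i<n. c i * G j i)"
      unfolding G_def by (subst sum.swap) (simp add: sum_distrib_left)
    also have "\<dots> = (\<Sum>i\<in>{j}. c i * G j i)"
    proof (rule sum.mono_neutral_right)
      show "\<forall>i\<in>{..<n} - {j}. c i * G j i = 0"
      proof
        fix i assume i: "i \<in> {..<n} - {j}"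
        hence "d i < \<mu>" using J[of i] by force
        hence "d j \<noteq> d i" using sp special_def by auto
        thus "c i * G j i = 0" using Gorth[of j i] i jn by auto
      qed
    qed (use jn in auto)
    also have "\<dots> = c j * G j j" by simp
    finally have 0: "c j * G j j = 0" by simp
    have "G j j \<noteq> 0"
    proof
      assume "G j j = 0"
      hence "(\<Sum>r<n. (p r j)^2) = 0" unfolding G_def by (simp add: power2_eq_square)
      hence pz: "\<forall>r<n. p r j = 0" by (simp add: sum_nonneg_eq_0_iff)
      have "\<forall>r<n. (\<Sum>i<n. p r i * (if i = j then 1 else 0)) = 0"
        using pz jn by (simp add: if_distrib[of "\<lambda>z. _ * z"] sum.delta cong: if_cong)
      from indep[OF this] jn show False by auto
    qed
    with 0 show ?thesis by simp
  qed
  define f where "f i = (if d i < \<mu> then sqrt (\<mu> - d i) else 0)" for i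
  have trm: "c i * c l * (\<mu> - d l) * G i l = (f i * c i) * (f l * c l) * G i l"
    if il: "i < n" "l < n" for i l
  proof (cases "G i l = 0")
    case True thus ?thesis by simp
  next
    case False
    hence dd: "d i = d l" using Gorth il by blast
    show ?thesis
    proof (cases "d l < \<mu>")
      case True
      hence "f i * f l = \<mu> - d l" unfolding f_def using dd
        by (simp add: real_sqrt_mult[symmetric])
      moreover have "(f i * c i) * (f l * c l) * G i l = c i * c l * (f i * f l) * G i l"
        by (simp only: mult_ac)
      ultimately show ?thesis by simp
    next
      case False
      hence "\<mu> \<le> d l" "\<mu> \<le> d i" using dd by auto
      hence "i = j" "l = j" using J il by auto
      moreover have special using \<open>l = j\<close> il False unfolding special_def by auto
      ultimately show ?thesis using cj by simp
    qed
  qed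
  define y where "y r = (\<Sum>i<n. p r i * (f i * c i))" for r
  have Q1: "(\<Sum>r<n. (x r)^2) = (\<Sum>i<n. \<Sum>l<n. c i * c l * G i l)"
  proof -
    have "(\<Sum>r<n. (x r)^2) = (\<Sum>r<n. (\<Sum>i<n. p r i * c i)^2)" using c by (intro sum.cong refl) simp
    thus ?thesis using sumsq_expand[where n=n and p=p and c=c] unfolding G_def by simp
  qed
  have Q2: "(\<Sum>r<n. \<Sum>s<n. x r * a r s * x s) = (\<Sum>i<n. \<Sum>l<n. c i * c l * d l * G i l)"
    using quad_expand[OF eig c] unfolding G_def .
  have Y: "(\<Sum>r<n. (y r)^2) = (\<Sum>i<n. \<Sum>l<n. (f i * c i) * (f l * c l) * G i l)"
    unfolding y_def G_def by (rule sumsq_expand)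
  have "\<mu> * (\<Sum>r<n. (x r)^2) - (\<Sum>r<n. \<Sum>s<n. x r * a r s * x s)
      = (\<Sum>i<n. \<Sum>l<n. c i * c l * (\<mu> - d l) * G i l)"
    unfolding Q1 Q2 by (simp add: sum_distrib_left sum_subtractf[symmetric] algebra_simps)
  also have "\<dots> = (\<Sum>r<n. (y r)^2)" unfolding Y using trm by (intro sum.cong refl) auto
  finally have eqy: "\<mu> * (\<Sum>r<n. (x r)^2) - (\<Sum>r<n. \<Sum>s<n. x r * a r s * x s) = (\<Sum>r<n. (y r)^2)" .
  have "\<mu> * (\<Sum>r<n. (x r)^2) \<le> (\<Sum>r<n. \<Sum>s<n. x r * a r s * x s)"
    using quad[of \<alpha> \<beta>] unfolding x_def .
  with eqy have "(\<Sum>r<n. (y r)^2) \<le> 0" by simp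
  hence "(\<Sum>r<n. (y r)^2) = 0" by (simp add: antisym sum_nonneg)
  hence "\<forall>r<n. y r = 0" by (simp add: sum_nonneg_eq_0_iff)
  hence fc: "\<forall>i<n. f i * c i = 0" using indep[of "\<lambda>i. f i * c i"] unfolding y_def by blast
  have call: "\<forall>i<n. c i = 0"
  proof (intro allI impI)
    fix i assume i: "i < n"
    show "c i = 0"
    proof (cases "d i < \<mu>")
      case True
      hence "f i > 0" unfolding f_def by simp
      thus ?thesis using fc i by auto
    next
      case False
      hence "i = j" using J i by auto
      moreover have special using \<open>i = j\<close> i False unfolding special_def by auto
      ultimately show ?thesis using cj by simp
    qed
  qed
  have "\<forall>r<n. x r = 0" using c call by simp
  with nz[OF ab] show False unfolding x_def by blast
qed


lemma order_prod_linear: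
  fixes ds :: "real list"
  shows "Polynomial.order x (\<Prod>a\<leftarrow>ds. [:-a,1:]) = count (mset ds) x"
proof (induction ds)
  case Nil
  have "Polynomial.order x (1::real poly) = 0" by (rule order_0I) simp
  thus ?case by simp
next
  case (Cons a ds)
  have nz: "(\<Prod>a\<leftarrow>ds. [:-a,1:]) \<noteq> (0::real poly)"
    by (auto simp add: prod_list_zero_iff)
  have nz2: "[:-a,1:] * (\<Prod>a\<leftarrow>ds. [:-a,1:]) \<noteq> (0::real poly)"
    using nz by (metis mult_eq_0_iff pCons_eq_0_iff one_neq_zero)
  have o1: "Polynomial.order x [:-a,1:] = (if x = a then 1 else 0)"
  proof (cases "x = a")
    case True
    thus ?thesis using order_power_n_n[of a 1] by simp
  next
    case False
    thus ?thesis by (simp add: order_0I)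
  qed
  show ?case using order_mult[OF nz2, of x] o1 Cons by simp
qed

lemma eigenvalue_mset_prod:
  fixes M :: "real mat"
  assumes cp: "char_poly M = (\<Prod>a\<leftarrow>ds. [:-a,1:])"
  shows "eigenvalue_mset M = mset ds"
proof -
  let ?p = "char_poly M"
  have nz: "?p \<noteq> 0" unfolding cp by (auto simp add: prod_list_zero_iff)
  have ord: "Polynomial.order x ?p = count (mset ds) x" for x unfolding cp by (rule order_prod_linear)
  have r: "poly ?p x = 0 \<longleftrightarrow> x \<in> set ds" for x
    using order_root[of ?p x] nz ord[of x] by (simp add: count_eq_zero_iff)
  have roots: "{x. poly ?p x = 0} = set ds" using r by blast
  show ?thesis
  proof (rule multiset_eqI)
    fix y
    have "count (eigenvalue_mset M) y = (\<Sum>x\<in>set ds. count (replicate_mset (count (mset ds) x) x) y)"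
      unfolding eigenvalue_mset_def roots ord by (simp add: count_sum)
    also have "\<dots> = (\<Sum>x\<in>set ds. if x = y then count (mset ds) y else 0)"
      by (intro sum.cong refl) auto
    also have "\<dots> = count (mset ds) y" by (simp add: sum.delta' count_eq_zero_iff)
    finally show "count (eigenvalue_mset M) y = count (mset ds) y" .
  qed
qed

lemma lambda2_ge:
  fixes M :: "real mat" and ds :: "real list"
  assumes cp: "char_poly M = (\<Prod>a\<leftarrow>ds. [:-a,1:])"
    and two: "2 \<le> card {i. i < length ds \<and> \<mu> \<le> ds ! i}"
  shows "\<mu> \<le> lambda2 M"
proof -
  define L where "L = sort ds"
  have Ld: "lambda2 M = rev L ! 1"
    unfolding lambda2_def eigenvalues_desc_def eigenvalue_mset_prod[OF cp] L_def by simp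
  have len: "length (filter (\<lambda>x. \<mu> \<le> x) L) = length (filter (\<lambda>x. \<mu> \<le> x) ds)"
  proof -
    have "mset (filter (\<lambda>x. \<mu> \<le> x) L) = mset (filter (\<lambda>x. \<mu> \<le> x) ds)"
      unfolding L_def by (simp add: mset_filter)
    thus ?thesis by (metis size_mset)
  qed
  also have "\<dots> = card {i. i < length ds \<and> \<mu> \<le> ds ! i}"
    by (rule length_filter_conv_card)
  finally have two': "2 \<le> length (filter (\<lambda>x. \<mu> \<le> x) L)" using two by simp
  have ln: "length L = length ds" unfolding L_def by simp
  hence l2: "2 \<le> length L" using two' length_filter_le[of _ L] by (metis le_trans)
  have sL: "sorted L" unfolding L_def by simp
  have idx: "rev L ! 1 = L ! (length L - 2)"
    using l2 by (simp add: rev_nth numeral_2_eq_2)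
  show ?thesis
  proof (rule ccontr)
    assume "\<not> \<mu> \<le> lambda2 M"
    hence lt: "L ! (length L - 2) < \<mu>" using Ld idx by simp
    have small: "L ! i < \<mu>" if "i \<le> length L - 2" for i
      using sorted_nth_mono[OF sL that] l2 lt by force
    have "{i. i < length L \<and> \<mu> \<le> L ! i} \<subseteq> {length L - 1}"
    proof
      fix i assume "i \<in> {i. i < length L \<and> \<mu> \<le> L ! i}"
      hence "i < length L" "\<mu> \<le> L ! i" by auto
      with small[of i] show "i \<in> {length L - 1}" by force
    qed
    hence "card {i. i < length L \<and> \<mu> \<le> L ! i} \<le> card {length L - 1}"
      by (intro card_mono) auto
    hence "card {i. i < length L \<and> \<mu> \<le> L ! i} \<le> 1" by simp
    moreover have "length (filter (\<lambda>x. \<mu> \<le> x) L) = card {i. i < length L \<and> \<mu> \<le> L ! i}"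
      by (rule length_filter_conv_card)
    ultimately show False using two' by simp
  qed
qed

lemma sym_eigenvalue_real:
  fixes A :: "real mat" and v :: "complex vec"
  assumes A: "A \<in> carrier_mat n n" and sym: "\<forall>i<n. \<forall>j<n. A$$(i,j) = A$$(j,i)"
    and v: "v \<in> carrier_vec n" "v \<noteq> 0\<^sub>v n"
    and ev: "map_mat complex_of_real A *\<^sub>v v = e \<cdot>\<^sub>v v"
  shows "Im e = 0"
proof -
  have comp: "(\<Sum>j<n. complex_of_real (A$$(i,j)) * v$j) = e * v$i" if i: "i < n" for i
  proof -
    have "(map_mat complex_of_real A *\<^sub>v v) $ i = e * v$i" using ev i v by simp
    moreover have "(map_mat complex_of_real A *\<^sub>v v) $ i = (\<Sum>j<n. complex_of_real (A$$(i,j)) * v$j)"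
      using A v i by (simp add: mult_mat_vec_def scalar_prod_def lessThan_atLeast0)
    ultimately show ?thesis by simp
  qed
  define s where "s = (\<Sum>i<n. cnj (v$i) * (\<Sum>j<n. complex_of_real (A$$(i,j)) * v$j))"
  define N where "N = (\<Sum>i<n. cnj (v$i) * v$i)"
  have sN: "s = e * N" unfolding s_def N_def using comp by (simp add: sum_distrib_left mult_ac)
  have "cnj s = (\<Sum>i<n. \<Sum>j<n. v$i * (complex_of_real (A$$(i,j)) * cnj (v$j)))"
    unfolding s_def by (simp add: sum_distrib_left)
  also have "\<dots> = (\<Sum>j<n. \<Sum>i<n. v$i * (complex_of_real (A$$(i,j)) * cnj (v$j)))"
    by (rule sum.swap)
  also have "\<dots> = s" unfolding s_def using sym
    by (intro sum.cong refl) (simp add: sum_distrib_left mult_ac)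
  finally have cs: "cnj s = s" .
  have "N = (\<Sum>i<n. complex_of_real ((cmod (v$i))^2))"
    unfolding N_def by (intro sum.cong refl) (metis complex_norm_square mult.commute of_real_power)
  hence Nr: "N = complex_of_real (\<Sum>i<n. (cmod (v$i))^2)" by simp
  obtain i where i: "i < n" "v$i \<noteq> 0" using v by (metis eq_vecI carrier_vecD index_zero_vec)
  have "(\<Sum>i<n. (cmod (v$i))^2) > 0"
  proof -
    have "(\<Sum>i<n. (cmod (v$i))^2) \<ge> (cmod (v$i))^2"
      using i by (intro member_le_sum) auto
    moreover have "(cmod (v$i))^2 > 0" using i by simp
    ultimately show ?thesis by linarith
  qed
  hence N0: "N \<noteq> 0" using Nr by (metis of_real_eq_0_iff less_irrefl)
  have "cnj e * N = e * N"
    using cs sN Nr by (metis complex_cnj_complex_of_real complex_cnj_mult)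
  hence "cnj e = e" using N0 by simp
  thus ?thesis by (metis Reals_cnj_iff complex_is_Real_iff)
qed

lemma sym_char_poly_splits:
  fixes A :: "real mat"
  assumes A: "A \<in> carrier_mat n n" and sym: "\<forall>i<n. \<forall>j<n. A$$(i,j) = A$$(j,i)"
  shows "\<exists>as. char_poly A = (\<Prod>a\<leftarrow>as. [:-a,1:])"
proof -
  let ?Ac = "map_mat complex_of_real A"
  have Ac: "?Ac \<in> carrier_mat n n" using A by simp
  obtain es where es: "char_poly ?Ac = (\<Prod>a\<leftarrow>es. [:-a,1:])"
    using char_poly_factorized[OF Ac] by blast
  have hom: "char_poly ?Ac = map_poly complex_of_real (char_poly A)"
    by (rule of_real_hom.char_poly_hom[OF A])
  have real: "Im e = 0" if e: "e \<in> set es" for e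
  proof -
    have "poly (char_poly ?Ac) e = 0" unfolding es using e
      by (simp add: poly_prod_list prod_list_zero_iff)
    hence "eigenvalue ?Ac e" using eigenvalue_root_char_poly[OF Ac] by simp
    then obtain v where "eigenvector ?Ac v e" unfolding eigenvalue_def by blast
    hence v: "v \<in> carrier_vec n" "v \<noteq> 0\<^sub>v n" "?Ac *\<^sub>v v = e \<cdot>\<^sub>v v"
      unfolding eigenvector_def using A by auto
    show ?thesis by (rule sym_eigenvalue_real[OF A sym v])
  qed
  interpret rh: map_poly_inj_idom_hom complex_of_real ..
  define as where "as = map Re es"
  have "map_poly complex_of_real (\<Prod>a\<leftarrow>as. [:-a,1:]) = (\<Prod>a\<leftarrow>es. [:-a,1:])"
    unfolding as_def using real
  proof (induction es)
    case Nil thus ?case by simp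
  next
    case (Cons e es)
    have "e = complex_of_real (Re e)" using Cons(2) by (simp add: complex_eq_iff)
    hence e1: "map_poly complex_of_real [:- Re e, 1:] = [:-e,1:]" by (simp add: map_poly_pCons)
    have IH: "map_poly complex_of_real (\<Prod>a\<leftarrow>map Re es. [:-a,1:]) = (\<Prod>a\<leftarrow>es. [:-a,1:])"
      using Cons by simp
    have "map_poly complex_of_real (\<Prod>a\<leftarrow>map Re (e#es). [:-a,1:])
       = map_poly complex_of_real ([:-Re e,1:] * (\<Prod>a\<leftarrow>map Re es. [:-a,1:]))"
      by (simp only: list.map prod_list.Cons)
    also have "\<dots> = map_poly complex_of_real [:-Re e,1:] * map_poly complex_of_real (\<Prod>a\<leftarrow>map Re es. [:-a,1:])"
      by (rule rh.hom_mult)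
    also have "\<dots> = [:-e,1:] * (\<Prod>a\<leftarrow>es. [:-a,1:])" by (simp only: e1 IH)
    also have "\<dots> = (\<Prod>a\<leftarrow>e#es. [:-a,1:])" by (simp only: list.map prod_list.Cons)
    finally show ?case .
  qed
  hence "map_poly complex_of_real (char_poly A) = map_poly complex_of_real (\<Prod>a\<leftarrow>as. [:-a,1:])"
    using hom es by simp
  hence "char_poly A = (\<Prod>a\<leftarrow>as. [:-a,1:])"
    by (simp add: rh.eq_iff)
  thus ?thesis by blast
qed

lemma mat_vec_index_sum:
  fixes C :: "real mat"
  assumes "C \<in> carrier_mat n n" "x \<in> carrier_vec n" "i < n"
  shows "(C *\<^sub>v x) $ i = (\<Sum>j<n. C$$(i,j) * x$j)"
  using assms by (simp add: mult_mat_vec_def scalar_prod_def lessThan_atLeast0)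

lemma sym_sq_ker:
  fixes C :: "real mat"
  assumes C: "C \<in> carrier_mat n n" and sym: "\<forall>i<n. \<forall>j<n. C$$(i,j) = C$$(j,i)"
    and x: "x \<in> carrier_vec n" and z: "C *\<^sub>v (C *\<^sub>v x) = 0\<^sub>v n"
  shows "C *\<^sub>v x = 0\<^sub>v n"
proof -
  define y where "y = C *\<^sub>v x"
  have y: "y \<in> carrier_vec n" unfolding y_def using C x by simp
  have yi: "y $ i = (\<Sum>j<n. C$$(i,j) * x$j)" if "i < n" for i
    unfolding y_def using mat_vec_index_sum[OF C x that] .
  have Cy: "(\<Sum>i<n. C$$(j,i) * y$i) = 0" if j: "j < n" for j
  proof -
    have "(C *\<^sub>v y) $ j = 0" using z j C unfolding y_def by (metis index_zero_vec(1))
    thus ?thesis using mat_vec_index_sum[OF C y j] by simp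
  qed
  have "(\<Sum>i<n. (y$i)^2) = (\<Sum>i<n. (\<Sum>j<n. C$$(i,j) * x$j) * y$i)"
    using yi by (intro sum.cong refl) (simp add: power2_eq_square)
  also have "\<dots> = (\<Sum>i<n. \<Sum>j<n. x$j * (C$$(i,j) * y$i))"
    by (simp add: sum_distrib_right sum_distrib_left mult_ac)
  also have "\<dots> = (\<Sum>i<n. \<Sum>j<n. x$j * (C$$(j,i) * y$i))"
    using sym by (intro sum.cong refl) simp
  also have "\<dots> = (\<Sum>j<n. x$j * (\<Sum>i<n. C$$(j,i) * y$i))"
    by (subst sum.swap) (simp add: sum_distrib_left)
  also have "\<dots> = 0" using Cy by simp
  finally have "(\<Sum>i<n. (y$i)^2) = 0" .
  hence "\<forall>i<n. y$i = 0" by (simp add: sum_nonneg_eq_0_iff)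
  hence "y = 0\<^sub>v n" using y by (intro eq_vecI) auto
  thus ?thesis unfolding y_def .
qed

lemma sum_list_min_eq:
  fixes xs :: "nat list"
  assumes "sum_list (map (min 2) xs) = sum_list (map (min 1) xs)"
  shows "\<forall>x\<in>set xs. x \<le> 1"
  using assms
proof (induction xs)
  case Nil thus ?case by simp
next
  case (Cons x xs)
  have "sum_list (map (min 1) xs) \<le> sum_list (map (min 2) xs)"
    by (rule sum_list_mono) simp
  moreover have "min 1 x \<le> min 2 x" by simp
  ultimately have "min 2 x = min 1 x" "sum_list (map (min 2) xs) = sum_list (map (min 1) xs)"
    using Cons(2) by auto
  thus ?case using Cons(1) by auto
qed

lemma jordan_matrix_diag:
  assumes "\<forall>p\<in>set n_as. fst p = 1"
  shows "jordan_matrix n_as = mat (length n_as) (length n_as)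
           (\<lambda>(i,j). if i = j then snd (n_as ! i) else (0::'a::{zero,one}))"
  using assms
proof (induction n_as)
  case Nil
  show ?case unfolding jordan_matrix_def by (intro eq_matI) auto
next
  case (Cons p n_as)
  obtain a where p: "p = (1, a)" using Cons(2) by (cases p) auto
  have sl: "sum_list (map fst n_as) = length n_as" using Cons(2)
    by (induction n_as) auto
  have IH: "jordan_matrix n_as = mat (length n_as) (length n_as)
           (\<lambda>(i,j). if i = j then snd (n_as ! i) else 0)" using Cons by auto
  show ?case unfolding p jordan_matrix_Cons sl IH
    by (intro eq_matI) (auto simp: nth_Cons' jordan_block_def)
qed

lemma sym_diagonalize:
  fixes A :: "real mat"
  assumes A: "A \<in> carrier_mat n n" and sym: "\<forall>i<n. \<forall>j<n. A$$(i,j) = A$$(j,i)"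
    and cp: "char_poly A = (\<Prod>a\<leftarrow>as. [:-a,1:])"
  shows "\<exists>ds P Q. length ds = n \<and> char_poly A = (\<Prod>a\<leftarrow>ds. [:-a,1:]) \<and>
    P \<in> carrier_mat n n \<and> Q \<in> carrier_mat n n \<and> P * Q = 1\<^sub>m n \<and> Q * P = 1\<^sub>m n \<and>
    (\<forall>i<n. \<forall>r<n. (\<Sum>j<n. A$$(r,j) * P$$(j,i)) = ds!i * P$$(r,i))"
proof -
  obtain n_as where jnf: "jordan_nf A n_as" using jordan_nf_exists[OF A cp] by blast
  have ones: "\<forall>p\<in>set n_as. fst p = 1"
  proof
    fix p assume p: "p \<in> set n_as"
    obtain m a where pa: "p = (m, a)" by (cases p)
    have m0: "m \<noteq> 0" using jnf p pa unfolding jordan_nf_def by force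
    define C where "C = char_matrix A a"
    have C: "C \<in> carrier_mat n n" unfolding C_def using A by simp
    have Csym: "\<forall>i<n. \<forall>j<n. C$$(i,j) = C$$(j,i)"
      unfolding C_def char_matrix_def using A sym by auto
    have C1: "C ^\<^sub>m 1 = C" using C by simp
    have C2: "C ^\<^sub>m 2 = C * C" using C by (simp add: numeral_2_eq_2)
    have "mat_kernel (C ^\<^sub>m 2) = mat_kernel (C ^\<^sub>m 1)"
    proof
      show "mat_kernel (C ^\<^sub>m 2) \<subseteq> mat_kernel (C ^\<^sub>m 1)"
      proof
        fix x assume "x \<in> mat_kernel (C ^\<^sub>m 2)"
        hence x: "x \<in> carrier_vec n" "(C * C) *\<^sub>v x = 0\<^sub>v n" unfolding C2 mat_kernel_def using C by auto
        hence "C *\<^sub>v (C *\<^sub>v x) = 0\<^sub>v n" using C by simp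
        hence "C *\<^sub>v x = 0\<^sub>v n" by (rule sym_sq_ker[OF C Csym x(1)])
        thus "x \<in> mat_kernel (C ^\<^sub>m 1)" unfolding C1 mat_kernel_def using C x by auto
      qed
      show "mat_kernel (C ^\<^sub>m 1) \<subseteq> mat_kernel (C ^\<^sub>m 2)"
      proof
        fix x assume "x \<in> mat_kernel (C ^\<^sub>m 1)"
        hence x: "x \<in> carrier_vec n" "C *\<^sub>v x = 0\<^sub>v n" unfolding C1 mat_kernel_def using C by auto
        moreover have "C *\<^sub>v 0\<^sub>v n = 0\<^sub>v n" using C
          by (intro eq_vecI) (auto simp: mult_mat_vec_def)
        ultimately have "(C * C) *\<^sub>v x = 0\<^sub>v n" using C by simp
        thus "x \<in> mat_kernel (C ^\<^sub>m 2)" unfolding C2 mat_kernel_def using C x by auto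
      qed
    qed
    moreover have "dim_col (C ^\<^sub>m 2) = dim_col (C ^\<^sub>m 1)" using C by simp
    ultimately have "kernel_dim (C ^\<^sub>m 2) = kernel_dim (C ^\<^sub>m 1)"
      unfolding kernel_dim_def by simp
    hence "dim_gen_eigenspace A a 2 = dim_gen_eigenspace A a 1"
      unfolding dim_gen_eigenspace_def C_def .
    hence "sum_list (map (min 2) (map fst [(n, e)\<leftarrow>n_as . e = a]))
         = sum_list (map (min 1) (map fst [(n, e)\<leftarrow>n_as . e = a]))"
      unfolding dim_gen_eigenspace[OF jnf] by simp
    from sum_list_min_eq[OF this] have "m \<le> 1" using p pa by force
    with m0 show "fst p = 1" using pa by simp
  qed
  define ds where "ds = map snd n_as"
  have sl: "sum_list (map fst n_as) = length n_as" using ones by (induction n_as) auto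
  have cpA: "char_poly A = (\<Prod>(m,a)\<leftarrow>n_as. [:-a,1:]^m)" by (rule jordan_nf_char_poly[OF jnf])
  also have "\<dots> = (\<Prod>a\<leftarrow>ds. [:-a,1:])" unfolding ds_def using ones
    by (induction n_as) auto
  finally have cpd: "char_poly A = (\<Prod>a\<leftarrow>ds. [:-a,1:])" .
  have lenn: "length ds = n"
  proof -
    have "degree (char_poly A) = n" using degree_monic_char_poly[OF A] by simp
    moreover have "degree (\<Prod>a\<leftarrow>ds. [:-a,1::real:]) = length ds"
      by (rule degree_linear_factors[of uminus ds, simplified]) 
    ultimately show ?thesis using cpd by simp
  qed
  have J: "jordan_matrix n_as = mat n n (\<lambda>(i,j). if i = j then ds ! i else 0)"
    using jordan_matrix_diag[OF ones] lenn unfolding ds_def by (auto intro!: eq_matI)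
  from jnf obtain P Q where wit: "similar_mat_wit A (jordan_matrix n_as) P Q"
    unfolding jordan_nf_def similar_mat_def by blast
  note w = similar_mat_witD2[OF A wit]
  define D where "D = jordan_matrix n_as"
  have D: "D \<in> carrier_mat n n" using w(5) unfolding D_def .
  have AP: "A * P = P * D"
  proof -
    have "A * P = P * D * Q * P" using w(3) unfolding D_def by simp
    also have "\<dots> = P * D * (Q * P)"
      by (rule assoc_mult_mat) (use w D in auto)
    also have "\<dots> = P * D" unfolding w(2) using w(6) D by simp
    finally show ?thesis .
  qed
  have eig: "\<forall>i<n. \<forall>r<n. (\<Sum>j<n. A$$(r,j) * P$$(j,i)) = ds!i * P$$(r,i)"
  proof (intro allI impI)
    fix i r assume i: "i < n" and r: "r < n"
    have "(A * P) $$ (r,i) = (\<Sum>j<n. A$$(r,j) * P$$(j,i))"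
      using A w(6) i r by (simp add: times_mat_def scalar_prod_def lessThan_atLeast0)
    moreover have "(P * D) $$ (r,i) = (\<Sum>j<n. P$$(r,j) * D$$(j,i))"
      using D w(6) i r by (simp add: times_mat_def scalar_prod_def lessThan_atLeast0)
    moreover have "(\<Sum>j<n. P$$(r,j) * D$$(j,i)) = ds!i * P$$(r,i)"
    proof -
      have "(\<Sum>j<n. P$$(r,j) * D$$(j,i)) = (\<Sum>j<n. if j = i then P$$(r,j) * ds!i else 0)"
        unfolding D_def J using i by (intro sum.cong refl) (auto simp: index_mat)
      also have "\<dots> = ds!i * P$$(r,i)" using i by (simp add: sum.delta')
      finally show ?thesis .
    qed
    ultimately show "(\<Sum>j<n. A$$(r,j) * P$$(j,i)) = ds!i * P$$(r,i)" using AP by simp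
  qed
  show ?thesis using lenn cpd w eig by blast
qed


lemma lambda2_lower:
  fixes A :: "real mat" and w1 w2 :: "nat \<Rightarrow> real" and \<mu> :: real
  assumes A: "A \<in> carrier_mat n n" and sym: "\<forall>i<n. \<forall>j<n. A$$(i,j) = A$$(j,i)"
    and nz: "\<And>\<alpha> \<beta>. \<alpha> \<noteq> 0 \<or> \<beta> \<noteq> 0 \<Longrightarrow> \<exists>r<n. \<alpha> * w1 r + \<beta> * w2 r \<noteq> 0"
    and quad: "\<And>\<alpha> \<beta>. \<mu> * (\<Sum>r<n. (\<alpha> * w1 r + \<beta> * w2 r)^2)
        \<le> (\<Sum>r<n. \<Sum>s<n. (\<alpha> * w1 r + \<beta> * w2 r) * A$$(r,s) * (\<alpha> * w1 s + \<beta> * w2 s))"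
  shows "\<mu> \<le> lambda2 A"
proof -
  obtain as where cp: "char_poly A = (\<Prod>a\<leftarrow>as. [:-a,1:])"
    using sym_char_poly_splits[OF A sym] by blast
  obtain ds P Q where ds: "length ds = n" "char_poly A = (\<Prod>a\<leftarrow>ds. [:-a,1:])"
    and P: "P \<in> carrier_mat n n" and Q: "Q \<in> carrier_mat n n"
    and PQ: "P * Q = 1\<^sub>m n" and QP: "Q * P = 1\<^sub>m n"
    and eig: "\<forall>i<n. \<forall>r<n. (\<Sum>j<n. A$$(r,j) * P$$(j,i)) = ds!i * P$$(r,i)"
    using sym_diagonalize[OF A sym cp] by blast
  have span: "\<exists>c. \<forall>r<n. x r = (\<Sum>i<n. P$$(r,i) * c i)" for x :: "nat \<Rightarrow> real"
  proof -
    define xv where "xv = vec n x"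
    define cv where "cv = Q *\<^sub>v xv"
    have xv: "xv \<in> carrier_vec n" unfolding xv_def by simp
    have cv: "cv \<in> carrier_vec n" unfolding cv_def using Q xv by simp
    have "P *\<^sub>v cv = (P * Q) *\<^sub>v xv" unfolding cv_def using P Q xv by simp
    also have "\<dots> = xv" unfolding PQ using xv by simp
    finally have e: "P *\<^sub>v cv = xv" .
    have "\<forall>r<n. x r = (\<Sum>i<n. P$$(r,i) * cv$i)"
    proof (intro allI impI)
      fix r assume r: "r < n"
      have "x r = (P *\<^sub>v cv) $ r" using e r unfolding xv_def by simp
      also have "\<dots> = (\<Sum>i<n. P$$(r,i) * cv$i)" by (rule mat_vec_index_sum[OF P cv r])
      finally show "x r = (\<Sum>i<n. P$$(r,i) * cv$i)" .
    qed
    thus ?thesis by blast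
  qed
  have indep: "\<forall>i<n. c i = 0" if h: "\<forall>r<n. (\<Sum>i<n. P$$(r,i) * c i) = 0" for c :: "nat \<Rightarrow> real"
  proof -
    define cv where "cv = vec n c"
    have cv: "cv \<in> carrier_vec n" unfolding cv_def by simp
    have "P *\<^sub>v cv = 0\<^sub>v n"
    proof (rule eq_vecI)
      fix r assume "r < dim_vec (0\<^sub>v n :: real vec)"
      hence r: "r < n" by simp
      have "(P *\<^sub>v cv) $ r = (\<Sum>i<n. P$$(r,i) * cv$i)" by (rule mat_vec_index_sum[OF P cv r])
      also have "\<dots> = (\<Sum>i<n. P$$(r,i) * c i)" unfolding cv_def by (intro sum.cong refl) simp
      finally show "(P *\<^sub>v cv) $ r = 0\<^sub>v n $ r" using h r by simp
    qed (use P in simp)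
    hence "Q *\<^sub>v (P *\<^sub>v cv) = Q *\<^sub>v 0\<^sub>v n" by simp
    moreover have "Q *\<^sub>v (P *\<^sub>v cv) = cv" using Q P cv
      by (metis QP assoc_mult_mat_vec one_mult_mat_vec)
    moreover have "Q *\<^sub>v 0\<^sub>v n = 0\<^sub>v n" using Q
      by (intro eq_vecI) (auto simp: mult_mat_vec_def)
    ultimately have "cv = 0\<^sub>v n" by simp
    thus ?thesis unfolding cv_def by (metis index_vec index_zero_vec(1))
  qed
  have "2 \<le> card {i. i<n \<and> \<mu> \<le> ds ! i}"
    using sym eig span indep nz quad
    by (rule courant_core[where a = "\<lambda>r s. A$$(r,s)" and p = "\<lambda>r i. P$$(r,i)" and d = "\<lambda>i. ds!i"])
  thus ?thesis using lambda2_ge[OF ds(2)] ds(1) by simp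
qed

lemma sum_ind_card:
  fixes P :: "nat \<Rightarrow> bool"
  shows "(\<Sum>s<n. (if P s then 1 else 0::real)) = real (card {s. s < n \<and> P s})"
proof -
  have "(\<Sum>s<n. (if P s then 1 else 0::real)) = (\<Sum>s\<in>{s. s < n \<and> P s}. 1)"
    by (rule sum.mono_neutral_cong_right) auto
  thus ?thesis by simp
qed

lemma quad_algebra:
  fixes k d t n m \<alpha> \<beta> e2 :: real
  assumes n: "n > 0" and t: "t = m / n" and dkt: "d - k * t \<ge> 0" and kd: "k - d + k * t \<ge> 0"
    and m: "m \<ge> 0" and e2: "e2 \<ge> m * d"
  shows "(d - k * t) * (\<alpha>^2 * n + 2 * \<alpha> * \<beta> * m + \<beta>^2 * m)
         \<le> \<alpha>^2 * (k * n) + 2 * \<alpha> * \<beta> * (k * m) + \<beta>^2 * e2"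
proof -
  have mt: "m = t * n" using t n by simp
  have "\<alpha>^2 * (k * n) + 2 * \<alpha> * \<beta> * (k * m) + \<beta>^2 * (m * d)
        - (d - k * t) * (\<alpha>^2 * n + 2 * \<alpha> * \<beta> * m + \<beta>^2 * m)
      = (k - d + k * t) * n * (\<alpha> + \<beta> * t)^2 + \<beta>^2 * m * t * (d - k * t)"
    unfolding mt by (simp add: power2_eq_square algebra_simps)
  moreover have "(k - d + k * t) * n * (\<alpha> + \<beta> * t)^2 \<ge> 0"
    using kd n by simp
  moreover have "\<beta>^2 * m * t * (d - k * t) \<ge> 0"
    using m n t dkt by simp
  moreover have "\<beta>^2 * (m * d) \<le> \<beta>^2 * e2" using e2 by (simp add: mult_left_mono)
  ultimately show ?thesis by linarith
qed


lemma motion_card_bound: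
  fixes n k q :: nat and E :: "nat \<Rightarrow> nat \<Rightarrow> bool" and \<sigma> :: "nat \<Rightarrow> nat"
  assumes G: "simple_graph n E"
    and reg: "regular n E k"
    and cn: "\<forall>u<n. \<forall>v<n. u \<noteq> v \<longrightarrow> card (neighbours n E u \<inter> neighbours n E v) \<le> q"
    and aut: "automorphism n E \<sigma>" and mv: "\<exists>v<n. \<sigma> v \<noteq> v"
  shows "(real k - \<bar>lambda2 (adj_matrix n E)\<bar> - real q) / (2 * real k) * real n
           \<le> real (card {v. v < n \<and> \<sigma> v \<noteq> v})"
proof -
  define A where "A = adj_matrix n E"
  define L where "L = lambda2 A"
  define S where "S = {v. v < n \<and> \<sigma> v \<noteq> v}"
  define m where "m = card S"
  define K where "K = real k - \<bar>L\<bar> - real q"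
  have Ssub: "S \<subseteq> {..<n}" unfolding S_def by auto
  have finS: "finite S" using Ssub finite_subset by blast
  obtain v0 where v0: "v0 < n" "\<sigma> v0 \<noteq> v0" using mv by blast
  have v0S: "v0 \<in> S" unfolding S_def using v0 by simp
  have npos: "n > 0" using v0 by simp
  have m1: "m \<ge> 1" unfolding m_def using finS v0S by (metis One_nat_def Suc_leI card_gt_0_iff empty_iff)
  have mn: "m \<le> n" unfolding m_def using card_mono[OF _ Ssub] by simp
  have goal_eq: "(real k - \<bar>lambda2 (adj_matrix n E)\<bar> - real q) / (2 * real k) * real n = K / (2 * real k) * real n"
    unfolding K_def L_def A_def ..
  show ?thesis unfolding goal_eq S_def[symmetric] m_def[symmetric]
  proof (cases "k = 0 \<or> K \<le> 0")
    case True
    hence "K / (2 * real k) * real n \<le> 0"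
    proof
      assume "k = 0" thus ?thesis by simp
    next
      assume "K \<le> 0" thus ?thesis by (simp add: divide_nonpos_nonneg mult_nonpos_nonneg)
    qed
    thus "K / (2 * real k) * real n \<le> real m" by simp
  next
    case False
    hence kpos: "real k > 0" and Kpos: "K > 0" by auto
    have suff: "K * real n / real k \<le> real m \<Longrightarrow> K / (2 * real k) * real n \<le> real m"
    proof -
      assume h: "K * real n / real k \<le> real m"
      have "K / (2 * real k) * real n = (K * real n / real k) / 2" by (simp add: field_simps)
      also have "\<dots> \<le> K * real n / real k"
      proof -
        have "0 \<le> K * real n / real k" using Kpos kpos by simp
        moreover have "\<And>z::real. 0 \<le> z \<Longrightarrow> z / 2 \<le> z" by simp
        ultimately show ?thesis by blast
      qed
      finally show ?thesis using h by simp
    qed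
    define d where "d = real k - real q"
    define t where "t = real m / real n"
    have Kd: "K \<le> d" unfolding K_def d_def by simp
    have Kk: "K \<le> real k" unfolding K_def by simp
    have mt: "real m = t * real n" unfolding t_def using npos by simp
    show "K / (2 * real k) * real n \<le> real m"
    proof (rule suff)
      show "K * real n / real k \<le> real m"
      proof (cases "d - real k * t < 0 \<or> m \<ge> n")
        case True
        thus ?thesis
        proof
          assume "d - real k * t < 0"
          hence "K \<le> real k * t" using Kd by simp
          hence "K * real n \<le> real k * real m" unfolding mt using npos
            by (metis mult.assoc mult_right_mono of_nat_0_le_iff)
          thus ?thesis using kpos by (simp add: divide_le_eq mult.commute)
        next
          assume "m \<ge> n"
          have "K * real n \<le> real k * real n" using Kk npos by (simp add: mult_right_mono)
          also have "\<dots> \<le> real k * real m" using \<open>m \<ge> n\<close> kpos by simp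
          finally show ?thesis using kpos by (simp add: divide_le_eq mult.commute)
        qed
      next
        case False
        hence dkt: "d - real k * t \<ge> 0" and mltn: "m < n" by auto
        have A: "A \<in> carrier_mat n n" unfolding A_def adj_matrix_def by simp
        have Aij: "A$$(i,j) = (if E i j then 1 else 0)" if "i < n" "j < n" for i j
          unfolding A_def adj_matrix_def using that by simp
        have Esym: "E i j = E j i" for i j using G unfolding simple_graph_def by blast
        have sym: "\<forall>i<n. \<forall>j<n. A$$(i,j) = A$$(j,i)" using Aij Esym by simp
        define chi where "chi r = (if r \<in> S then 1 else 0::real)" for r
        have sumchi: "(\<Sum>r<n. chi r) = real m"
        proof -
          have "(\<Sum>r<n. chi r) = real (card {s. s < n \<and> s \<in> S})"
            unfolding chi_def by (rule sum_ind_card)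
          also have "{s. s < n \<and> s \<in> S} = S" using Ssub by auto
          finally show ?thesis unfolding m_def .
        qed
        have rowsum: "(\<Sum>s<n. A$$(r,s)) = real k" if r: "r < n" for r
        proof -
          have "(\<Sum>s<n. A$$(r,s)) = (\<Sum>s<n. (if E r s then 1 else 0::real))"
            using Aij r by (intro sum.cong refl) simp
          also have "\<dots> = real (card {s. s < n \<and> E r s})" by (rule sum_ind_card)
          also have "{s. s < n \<and> E r s} = neighbours n E r" unfolding neighbours_def by auto
          also have "card (neighbours n E r) = k" using reg r unfolding regular_def by blast
          finally show ?thesis .
        qed
        have colsum: "(\<Sum>r<n. A$$(r,s)) = real k" if s: "s < n" for s
        proof -
          have "(\<Sum>r<n. A$$(r,s)) = (\<Sum>r<n. A$$(s,r))" using sym s by (intro sum.cong refl) simp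
          thus ?thesis using rowsum s by simp
        qed
        have sig: "\<sigma> r < n" if "r < n" for r
          using aut that unfolding automorphism_def bij_betw_def by auto
        have sigE: "E u v \<longleftrightarrow> E (\<sigma> u) (\<sigma> v)" if "u < n" "v < n" for u v
          using aut that unfolding automorphism_def by blast
        have deg: "real (card {s. s < n \<and> E r s \<and> s \<in> S}) \<ge> d" if rS: "r \<in> S" for r
        proof -
          have r: "r < n" "\<sigma> r \<noteq> r" using rS unfolding S_def by auto
          define N1 where "N1 = {s. s < n \<and> E r s \<and> s \<in> S}"
          define N2 where "N2 = {s. s < n \<and> E r s \<and> s \<notin> S}"
          have NN: "neighbours n E r = N1 \<union> N2" unfolding N1_def N2_def neighbours_def by auto
          have fin1: "finite N1" unfolding N1_def by simp
          have fin2: "finite N2" unfolding N2_def by simp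
          have "N2 \<subseteq> neighbours n E r \<inter> neighbours n E (\<sigma> r)"
          proof
            fix s assume "s \<in> N2"
            hence s: "s < n" "E r s" "\<sigma> s = s" unfolding N2_def S_def by auto
            have "E (\<sigma> r) (\<sigma> s)" using sigE[OF r(1) s(1)] s(2) by simp
            thus "s \<in> neighbours n E r \<inter> neighbours n E (\<sigma> r)"
              using s unfolding neighbours_def by simp
          qed
          hence "card N2 \<le> card (neighbours n E r \<inter> neighbours n E (\<sigma> r))"
            by (intro card_mono) (auto simp: neighbours_def)
          also have "\<dots> \<le> q" using cn r sig[OF r(1)] by auto
          finally have c2: "card N2 \<le> q" .
          have "k = card (neighbours n E r)" using reg r unfolding regular_def by auto
          also have "\<dots> \<le> card N1 + card N2" unfolding NN by (rule card_Un_le)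
          finally have "k \<le> card N1 + q" using c2 by simp
          thus ?thesis unfolding d_def N1_def by simp
        qed
        define e2 where "e2 = (\<Sum>r<n. \<Sum>s<n. chi r * A$$(r,s) * chi s)"
        have e2: "e2 \<ge> real m * d"
        proof -
          have inner: "chi r * (\<Sum>s<n. A$$(r,s) * chi s) \<ge> chi r * d" if r: "r < n" for r
          proof (cases "r \<in> S")
            case True
            have "(\<Sum>s<n. A$$(r,s) * chi s) = (\<Sum>s<n. (if E r s \<and> s \<in> S then 1 else 0::real))"
              using Aij r unfolding chi_def by (intro sum.cong refl) auto
            also have "\<dots> = real (card {s. s < n \<and> E r s \<and> s \<in> S})"
              by (rule sum_ind_card)
            finally show ?thesis using deg[OF True] True unfolding chi_def by simp
          next
            case False thus ?thesis unfolding chi_def by simp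
          qed
          have "real m * d = (\<Sum>r<n. chi r * d)" by (simp only: sum_distrib_right[symmetric] sumchi)
          also have "\<dots> \<le> (\<Sum>r<n. chi r * (\<Sum>s<n. A$$(r,s) * chi s))"
            using inner by (intro sum_mono) auto
          also have "\<dots> = e2" unfolding e2_def by (simp add: sum_distrib_left mult.assoc)
          finally show ?thesis .
        qed
        have lam: "d - real k * t \<le> L"
          unfolding L_def
        proof (rule lambda2_lower[OF A sym, where ?w1.0 = "\<lambda>r. 1" and ?w2.0 = chi])
          fix \<alpha> \<beta> :: real assume ab: "\<alpha> \<noteq> 0 \<or> \<beta> \<noteq> 0"
          obtain u where u: "u < n" "u \<notin> S"
          proof -
            have "\<not> {..<n} \<subseteq> S"
            proof
              assume "{..<n} \<subseteq> S"
              hence "S = {..<n}" using Ssub by auto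
              thus False using mltn unfolding m_def by simp
            qed
            thus ?thesis using that by auto
          qed
          show "\<exists>r<n. \<alpha> * 1 + \<beta> * chi r \<noteq> 0"
          proof (cases "\<alpha> = 0")
            case True
            hence "\<alpha> * 1 + \<beta> * chi v0 \<noteq> 0" using ab v0S unfolding chi_def by simp
            thus ?thesis using v0 by blast
          next
            case False
            hence "\<alpha> * 1 + \<beta> * chi u \<noteq> 0" using u unfolding chi_def by simp
            thus ?thesis using u by blast
          qed
        next
          fix \<alpha> \<beta> :: real
          define x where "x r = \<alpha> * 1 + \<beta> * chi r" for r
          have chi2: "chi r * chi r = chi r" for r unfolding chi_def by simp
          have Q1: "(\<Sum>r<n. (x r)^2) = \<alpha>^2 * real n + 2 * \<alpha> * \<beta> * real m + \<beta>^2 * real m"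
          proof -
            have "(\<Sum>r<n. (x r)^2) = (\<Sum>r<n. \<alpha>^2 + 2 * \<alpha> * \<beta> * chi r + \<beta>^2 * chi r)"
              unfolding x_def using chi2 by (intro sum.cong refl) (simp add: power2_eq_square algebra_simps)
            also have "\<dots> = \<alpha>^2 * real n + 2 * \<alpha> * \<beta> * (\<Sum>r<n. chi r) + \<beta>^2 * (\<Sum>r<n. chi r)"
              by (simp add: sum.distrib sum_distrib_left)
            finally show ?thesis unfolding sumchi .
          qed
          have S11: "(\<Sum>r<n. \<Sum>s<n. A$$(r,s)) = real k * real n" using rowsum by simp
          have S12: "(\<Sum>r<n. \<Sum>s<n. A$$(r,s) * chi s) = real k * real m"
          proof -
            have "(\<Sum>r<n. \<Sum>s<n. A$$(r,s) * chi s) = (\<Sum>s<n. chi s * (\<Sum>r<n. A$$(r,s)))"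
              by (subst sum.swap) (simp add: sum_distrib_left mult.commute)
            also have "\<dots> = (\<Sum>s<n. chi s * real k)" using colsum by simp
            also have "\<dots> = (\<Sum>s<n. chi s) * real k" by (rule sum_distrib_right[symmetric])
            finally show ?thesis using sumchi by simp
          qed
          have S21: "(\<Sum>r<n. \<Sum>s<n. chi r * A$$(r,s)) = real k * real m"
          proof -
            have "(\<Sum>r<n. \<Sum>s<n. chi r * A$$(r,s)) = (\<Sum>r<n. chi r * (\<Sum>s<n. A$$(r,s)))"
              by (simp add: sum_distrib_left)
            also have "\<dots> = (\<Sum>r<n. chi r * real k)" using rowsum by simp
            also have "\<dots> = (\<Sum>s<n. chi s) * real k" by (rule sum_distrib_right[symmetric])
            finally show ?thesis using sumchi by simp
          qed
          have Q2: "(\<Sum>r<n. \<Sum>s<n. x r * A$$(r,s) * x s)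
              = \<alpha>^2 * (real k * real n) + 2 * \<alpha> * \<beta> * (real k * real m) + \<beta>^2 * e2"
          proof -
            have "(\<Sum>r<n. \<Sum>s<n. x r * A$$(r,s) * x s)
               = (\<Sum>r<n. \<Sum>s<n. \<alpha>^2 * A$$(r,s) + \<alpha> * \<beta> * (A$$(r,s) * chi s)
                    + \<alpha> * \<beta> * (chi r * A$$(r,s)) + \<beta>^2 * (chi r * A$$(r,s) * chi s))"
              unfolding x_def by (intro sum.cong refl) (simp add: power2_eq_square algebra_simps)
            also have "\<dots> = \<alpha>^2 * (\<Sum>r<n. \<Sum>s<n. A$$(r,s)) + \<alpha> * \<beta> * (\<Sum>r<n. \<Sum>s<n. A$$(r,s) * chi s)
                  + \<alpha> * \<beta> * (\<Sum>r<n. \<Sum>s<n. chi r * A$$(r,s)) + \<beta>^2 * e2"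
              unfolding e2_def by (simp add: sum.distrib sum_distrib_left)
            finally show ?thesis unfolding S11 S12 S21 by simp
          qed
          have "(d - real k * t) * (\<alpha>^2 * real n + 2 * \<alpha> * \<beta> * real m + \<beta>^2 * real m)
              \<le> \<alpha>^2 * (real k * real n) + 2 * \<alpha> * \<beta> * (real k * real m) + \<beta>^2 * e2"
          proof (rule quad_algebra)
            show "real k - d + real k * t \<ge> 0"
            proof -
              have "d \<le> real k" unfolding d_def by simp
              moreover have "0 \<le> real k * t" unfolding t_def by simp
              ultimately show ?thesis by linarith
            qed
          qed (use npos t_def dkt e2 in auto)
          thus "(d - real k * t) * (\<Sum>r<n. (\<alpha> * 1 + \<beta> * chi r)^2)
             \<le> (\<Sum>r<n. \<Sum>s<n. (\<alpha> * 1 + \<beta> * chi r) * A$$(r,s) * (\<alpha> * 1 + \<beta> * chi s))"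
            using Q1 Q2 unfolding x_def by simp
        qed
        have "K \<le> d - L" unfolding K_def d_def by simp
        hence "K \<le> real k * t" using lam by simp
        hence "K * real n \<le> real k * real m" unfolding mt using npos
          by (metis mult.assoc mult_right_mono of_nat_0_le_iff)
        thus ?thesis using kpos by (simp add: divide_le_eq mult.commute)
      qed
    qed
  qed
qed


theorem lemma5p1:
  fixes n k q :: nat and E :: "nat \<Rightarrow> nat \<Rightarrow> bool"
  assumes "simple_graph n E"
    and "regular n E k"
    and "balanced_bipartite n E"
    and "\<forall>u<n. \<forall>v<n. u \<noteq> v \<longrightarrow> card (neighbours n E u \<inter> neighbours n E v) \<le> q"
  shows "ereal ((real k - \<bar>lambda2 (adj_matrix n E)\<bar> - real q) / (2 * real k) * real n)
           \<le> ereal_of_enat (motion n E)"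
proof -
  define T where "T = {enat (card {v. v < n \<and> \<sigma> v \<noteq> v}) | \<sigma>.
      automorphism n E \<sigma> \<and> (\<exists>v<n. \<sigma> v \<noteq> v)}"
  have mot: "motion n E = Inf T" unfolding motion_def T_def ..
  show ?thesis
  proof (cases "T = {}")
    case True
    hence "motion n E = \<infinity>" unfolding mot by (simp add: Inf_enat_def)
    thus ?thesis by simp
  next
    case False
    then obtain x where "x \<in> T" by blast
    hence "Inf T \<in> T" unfolding Inf_enat_def by (auto intro: LeastI)
    then obtain \<sigma> where s: "Inf T = enat (card {v. v < n \<and> \<sigma> v \<noteq> v})"
      "automorphism n E \<sigma>" "\<exists>v<n. \<sigma> v \<noteq> v" unfolding T_def by blast
    have "(real k - \<bar>lambda2 (adj_matrix n E)\<bar> - real q) / (2 * real k) * real n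
           \<le> real (card {v. v < n \<and> \<sigma> v \<noteq> v})"
      by (rule motion_card_bound[OF assms(1) assms(2) assms(4) s(2) s(3)])
    thus ?thesis unfolding mot s(1) by simp
  qed
qed

end
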